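(* Let $T$ be a tree on $n$ vertices. If there is a leaf $v$ of $T$ with $|N_2(v)|\le\lceil n/2\rceil-4$, then $\operatorname{diam}(\mathcal{C}_3(T))\ge\lfloor 3n/2\rfloor+1$.
   Context: For a vertex $v$ of a tree, $N_i(v)$ is the set of vertices at distance exactly $i$ from $v$. A proper 3-coloring of a tree $T=(V,E)$ is a map $f\colon V\to\mathbb{Z}/3\mathbb{Z}$ with $f(u)\neq f(v)$ for every edge $uv\in E$. The 3-coloring graph $\mathcal{C}_3(T)$ has the proper 3-colorings as vertices, two colorings adjacent iff they differ at exactly one vertex; $\operatorname{diam}$ denotes graph diameter. *)

theory Defs
  imports Complex_Main
begin

definition graph :: "'a set \<Rightarrow> 'a set set \<Rightarrow> bool" where
  "graph V E \<longleftrightarrow> finite V \<and> (\<forall>e\<in>E. \<exists>u v. u \<in> V \<and> v \<in> V \<and> u \<noteq> v \<and> e = {u, v})"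

definition walk :: "'a set \<Rightarrow> 'a set set \<Rightarrow> 'a list \<Rightarrow> bool" where
  "walk V E p \<longleftrightarrow> p \<noteq> [] \<and> set p \<subseteq> V \<and> (\<forall>i. Suc i < length p \<longrightarrow> {p ! i, p ! Suc i} \<in> E)"

definition connected_graph :: "'a set \<Rightarrow> 'a set set \<Rightarrow> bool" where
  "connected_graph V E \<longleftrightarrow> (\<forall>u\<in>V. \<forall>v\<in>V. \<exists>p. walk V E p \<and> hd p = u \<and> last p = v)"

definition has_cycle :: "'a set \<Rightarrow> 'a set set \<Rightarrow> bool" where
  "has_cycle V E \<longleftrightarrow> (\<exists>p. walk V E p \<and> length p \<ge> 3 \<and> distinct p \<and> {last p, hd p} \<in> E)"

definition tree :: "'a set \<Rightarrow> 'a set set \<Rightarrow> bool" where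
  "tree V E \<longleftrightarrow> graph V E \<and> V \<noteq> {} \<and> connected_graph V E \<and> \<not> has_cycle V E"

definition degree :: "'a set set \<Rightarrow> 'a \<Rightarrow> nat" where
  "degree E v = card {e\<in>E. v \<in> e}"

definition leaf :: "'a set \<Rightarrow> 'a set set \<Rightarrow> 'a \<Rightarrow> bool" where
  "leaf V E v \<longleftrightarrow> v \<in> V \<and> degree E v = 1"

definition dist :: "'a set \<Rightarrow> 'a set set \<Rightarrow> 'a \<Rightarrow> 'a \<Rightarrow> nat" where
  "dist V E u v = (LEAST k. \<exists>p. walk V E p \<and> hd p = u \<and> last p = v \<and> length p = Suc k)"

definition sphere :: "'a set \<Rightarrow> 'a set set \<Rightarrow> nat \<Rightarrow> 'a \<Rightarrow> 'a set" where
  "sphere V E i v = {u\<in>V. dist V E v u = i}"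

text \<open>Proper 3-colourings, with colours in {0,1,2} (representing Z/3Z);
  colourings are functions V -> {0,1,2}, taken extensional (value 0 outside V)
  so that each colouring of V corresponds to exactly one HOL function.\<close>
definition proper3 :: "'a set \<Rightarrow> 'a set set \<Rightarrow> ('a \<Rightarrow> nat) \<Rightarrow> bool" where
  "proper3 V E f \<longleftrightarrow> (\<forall>v\<in>V. f v < 3) \<and> (\<forall>v. v \<notin> V \<longrightarrow> f v = 0)
     \<and> (\<forall>u v. {u, v} \<in> E \<longrightarrow> f u \<noteq> f v)"

definition colourings :: "'a set \<Rightarrow> 'a set set \<Rightarrow> ('a \<Rightarrow> nat) set" where
  "colourings V E = {f. proper3 V E f}"

definition col_adj :: "'a set \<Rightarrow> ('a \<Rightarrow> nat) \<Rightarrow> ('a \<Rightarrow> nat) \<Rightarrow> bool" where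
  "col_adj V f g \<longleftrightarrow> card {v\<in>V. f v \<noteq> g v} = 1"

definition col_graph_edges :: "'a set \<Rightarrow> 'a set set \<Rightarrow> ('a \<Rightarrow> nat) set set" where
  "col_graph_edges V E = {{f, g} | f g. f \<in> colourings V E \<and> g \<in> colourings V E \<and> col_adj V f g}"

text \<open>Diameter of a finite graph (supremum of distances between vertex pairs;
  pairs are assumed connected, which holds for C_3 of a tree).\<close>
definition diam :: "'b set \<Rightarrow> 'b set set \<Rightarrow> nat" where
  "diam V E = Sup {dist V E u v | u v. u \<in> V \<and> v \<in> V}"

end

theory Submission
  imports Defs
begin

lemma walk_iff: "walk V E p \<longleftrightarrow> p \<noteq> [] \<and> set p \<subseteq> V \<and> successively (\<lambda>a b. {a,b} \<in> E) p"
  by (auto simp: walk_def successively_conv_nth)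

lemma walk_snoc: "walk V E p \<Longrightarrow> b \<in> V \<Longrightarrow> {last p, b} \<in> E \<Longrightarrow> walk V E (p @ [b])"
  by (auto simp: walk_iff successively_append_iff)

lemma walk_butlast: "walk V E (p @ [b]) \<Longrightarrow> p \<noteq> [] \<Longrightarrow> walk V E p \<and> {last p, b} \<in> E"
  by (auto simp: walk_iff successively_append_iff)

lemma graph_edge: "graph V E \<Longrightarrow> {a,b} \<in> E \<Longrightarrow> a \<in> V \<and> b \<in> V \<and> a \<noteq> b"
  unfolding graph_def by (metis doubleton_eq_iff insert_absorb2 insert_not_empty singleton_insert_inj_eq)

lemma dist_ex:
  assumes "tree V E" "u \<in> V" "x \<in> V"
  shows "\<exists>p. walk V E p \<and> hd p = u \<and> last p = x \<and> length p = Suc (dist V E u x)"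
proof -
  from assms obtain p where p: "walk V E p" "hd p = u" "last p = x"
    by (auto simp: tree_def connected_graph_def)
  then have "length p = Suc (length p - 1)" by (cases p) (auto simp: walk_def)
  with p have "\<exists>k p. walk V E p \<and> hd p = u \<and> last p = x \<and> length p = Suc k" by blast
  then show ?thesis unfolding dist_def by (rule LeastI_ex)
qed

lemma dist_le:
  assumes "walk V E p" "hd p = u" "last p = x"
  shows "dist V E u x \<le> length p - 1"
proof -
  have "length p = Suc (length p - 1)" using assms by (cases p) (auto simp: walk_def)
  with assms show ?thesis unfolding dist_def by (intro Least_le) blast
qed

lemma dist_edge:
  assumes "tree V E" "v \<in> V" "{x,y} \<in> E"
  shows "dist V E v y \<le> Suc (dist V E v x)"
proof -
  have g: "graph V E" using assms by (simp add: tree_def)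
  from graph_edge[OF g assms(3)] have xy: "x \<in> V" "y \<in> V" by auto
  obtain p where p: "walk V E p" "hd p = v" "last p = x" "length p = Suc (dist V E v x)"
    using dist_ex[OF assms(1,2) xy(1)] by blast
  have "walk V E (p @ [y])" using walk_snoc[OF p(1) xy(2)] p(3) assms(3) by simp
  moreover have "hd (p @ [y]) = v" using p by (cases p) (auto simp: walk_def)
  ultimately have "dist V E v y \<le> length (p @ [y]) - 1" by (intro dist_le) auto
  then show ?thesis using p by simp
qed

lemma walk_take:
  assumes "walk V E p" "i < length p"
  shows "walk V E (take (Suc i) p)" "hd (take (Suc i) p) = hd p" "last (take (Suc i) p) = p ! i"
proof -
  show "walk V E (take (Suc i) p)" using assms
    by (auto simp: walk_def dest: in_set_takeD)
  show "hd (take (Suc i) p) = hd p" using assms by (cases p) auto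
  show "last (take (Suc i) p) = p ! i" using assms by (subst last_conv_nth) (auto simp: min_def, subgoal_tac "length p - Suc 0 = i", simp, linarith)
qed

lemma shortest_nth:
  assumes "tree V E" "v \<in> V" "walk V E p" "hd p = v" "length p = Suc (dist V E v (last p))"
    and "i < length p"
  shows "dist V E v (p ! i) = i"
proof -
  have le: "dist V E v (p ! i) \<le> i"
    using dist_le[OF walk_take(1)[OF assms(3,6)]] walk_take[OF assms(3,6)] assms by simp
  have pi: "p ! i \<in> V" using assms(3,6) by (auto simp: walk_def)
  show ?thesis
  proof (rule ccontr)
    assume ne: "dist V E v (p ! i) \<noteq> i"
    obtain q where q: "walk V E q" "hd q = v" "last q = p ! i" "length q = Suc (dist V E v (p ! i))"
      using dist_ex[OF assms(1,2) pi] by blast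
    show False
    proof (cases "Suc i = length p")
      case True
      then have "p ! i = last p" using assms by (metis diff_Suc_1 last_conv_nth list.size(3) nat.distinct(1))
      then show False using ne True assms(5) by simp
    next
      case False
      then have si: "Suc i < length p" using assms(6) by simp
      define r where "r = q @ drop (Suc i) p"
      have "walk V E r" unfolding r_def walk_iff
      proof (intro conjI)
        show "q @ drop (Suc i) p \<noteq> []" using q by (auto simp: walk_def)
        show "set (q @ drop (Suc i) p) \<subseteq> V" using q assms(3) by (auto simp: walk_def dest: in_set_dropD)
        have "successively (\<lambda>a b. {a,b} \<in> E) (drop (Suc i) p)"
          using assms(3) unfolding walk_iff successively_conv_nth by auto
        moreover have "{last q, hd (drop (Suc i) p)} \<in> E"
          using q(3) si assms(3) by (auto simp: walk_def hd_drop_conv_nth)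
        ultimately show "successively (\<lambda>a b. {a, b} \<in> E) (q @ drop (Suc i) p)"
          using q(1) by (auto simp: walk_iff successively_append_iff)
      qed
      moreover have "hd r = v" using q by (cases q) (auto simp: r_def walk_def)
      moreover have "last r = last p" using si by (simp add: r_def)
      ultimately have "dist V E v (last p) \<le> length r - 1" by (intro dist_le) auto
      then show False using q le ne si assms(5) by (simp add: r_def)
    qed
  qed
qed

lemma successively_drop: "successively R xs \<Longrightarrow> successively R (drop n xs)"
  by (metis append_take_drop_id successively_append_iff)

lemma cycle_contra:
  assumes tr: "tree V E" and vV: "v \<in> V"
    and P: "walk V E P" "hd P = v" "length P = Suc k" "\<forall>i<Suc k. dist V E v (P ! i) = i"
    and Q: "walk V E Q" "hd Q = v" "length Q = Suc k" "\<forall>i<Suc k. dist V E v (Q ! i) = i"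
    and ne: "last P \<noteq> last Q"
    and mid: "distinct mid" "set mid \<inter> (set P \<union> set Q) = {}" "set mid \<subseteq> V"
      "successively (\<lambda>a b. {a,b} \<in> E) (last P # mid @ [last Q])"
  shows False
proof -
  have key: "i = j" if "i < Suc k" "j < Suc k" "P ! i = Q ! j" for i j
    using P(4) Q(4) that by metis
  have Pne: "P \<noteq> []" "Q \<noteq> []" using P Q by auto
  define A where "A = {i. i \<le> k \<and> P ! i \<in> set Q}"
  have finA: "finite A" unfolding A_def by auto
  have "P ! 0 = v" "Q ! 0 = v" using P Q Pne by (auto simp: hd_conv_nth)
  then have "0 \<in> A" unfolding A_def using Q Pne by (auto simp: hd_conv_nth) (metis hd_conv_nth hd_in_set)
  define a where "a = Max A"
  have aA: "a \<in> A" unfolding a_def using finA \<open>0 \<in> A\<close> by (intro Max_in) auto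
  have amax: "i \<le> a" if "i \<in> A" for i unfolding a_def using finA that by auto
  from aA have ak: "a \<le> k" and "P ! a \<in> set Q" unfolding A_def by auto
  then obtain j where j: "j < Suc k" "P ! a = Q ! j" using Q(3) by (auto simp: in_set_conv_nth)
  then have Pa: "P ! a = Q ! a" using key[of a j] ak by simp
  have lastP: "last P = P ! k" and lastQ: "last Q = Q ! k" using P Q Pne by (auto simp: last_conv_nth)
  have "a \<noteq> k" using Pa ne lastP lastQ by auto
  with ak have ak': "a < k" by simp
  have distP: "distinct P" unfolding distinct_conv_nth using key P(4) P(3) by metis
  have distQ: "distinct Q" unfolding distinct_conv_nth using key Q(4) Q(3) by metis
  define R where "R = rev (drop (Suc a) Q)"
  define L where "L = drop a P @ mid @ R"
  have R_ne: "R \<noteq> []" using ak' Q(3) by (simp add: R_def)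
  have hdR: "hd R = last Q" using R_ne by (simp add: R_def hd_rev)
  have lastR: "last R = Q ! Suc a" using ak' Q(3) by (simp add: R_def last_rev hd_drop_conv_nth)
  have dP_ne: "drop a P \<noteq> []" using ak' P(3) by simp
  have lastdP: "last (drop a P) = last P" using ak' P(3) by simp
  have hddP: "hd (drop a P) = P ! a" using ak' P(3) by (simp add: hd_drop_conv_nth)
  have sP: "successively (\<lambda>a b. {a,b} \<in> E) (drop a P)"
    using P(1) by (auto simp: walk_iff intro: successively_drop)
  have sQ: "successively (\<lambda>a b. {a,b} \<in> E) (drop (Suc a) Q)"
    using Q(1) by (auto simp: walk_iff intro: successively_drop)
  have sR: "successively (\<lambda>a b. {a,b} \<in> E) R"
    unfolding R_def successively_rev using sQ by (simp add: insert_commute)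
  have smid: "successively (\<lambda>a b. {a,b} \<in> E) (mid @ R)"
  proof -
    have "successively (\<lambda>a b. {a,b} \<in> E) (mid @ [last Q])" using mid(4)
      by (simp add: successively_Cons split: if_splits)
    then have "successively (\<lambda>a b. {a,b} \<in> E) mid" "mid = [] \<or> {last mid, last Q} \<in> E"
      by (auto simp: successively_append_iff)
    then show ?thesis using sR R_ne hdR by (auto simp: successively_append_iff)
  qed
  have junc: "{last P, hd (mid @ R)} \<in> E"
  proof (cases mid)
    case Nil then show ?thesis using mid(4) hdR by simp
  next
    case (Cons m ms) then show ?thesis using mid(4) by simp
  qed
  have sL: "successively (\<lambda>a b. {a,b} \<in> E) L"
    unfolding L_def using sP smid junc dP_ne lastdP R_ne
    by (subst successively_append_iff) auto
  have setL: "set L \<subseteq> V" using P(1) Q(1) mid(3)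
    by (auto simp: L_def R_def walk_def dest: in_set_dropD)
  have walkL: "walk V E L" using sL setL R_ne by (auto simp: walk_iff L_def)
  have lenL: "length L \<ge> 3" using ak' P(3) Q(3) by (simp add: L_def R_def)
  have disj: "set (drop a P) \<inter> set R = {}"
  proof (rule ccontr)
    assume "set (drop a P) \<inter> set R \<noteq> {}"
    then obtain x where x1: "x \<in> set (drop a P)" and x2: "x \<in> set (drop (Suc a) Q)"
      by (auto simp: R_def)
    from x1 obtain i where i: "i < Suc k - a" "x = P ! (a + i)" using P(3)
      by (auto simp: in_set_conv_nth)
    from x2 obtain j where j: "j < k - a" "x = Q ! (Suc a + j)" using Q(3)
      by (auto simp: in_set_conv_nth)
    have "a + i = Suc a + j" using key[of "a+i" "Suc a + j"] i j ak' by simp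
    moreover have "a + i \<in> A"
    proof -
      have "Suc a + j < length Q" using j Q(3) by simp
      then have "Q ! (Suc a + j) \<in> set Q" by (rule nth_mem)
      then show ?thesis unfolding A_def using i j by simp
    qed
    ultimately show False using amax by fastforce
  qed
  have d1: "distinct (drop a P)" using distP by simp
  have d2: "distinct R" using distQ by (simp add: R_def)
  have s1: "set (drop a P) \<subseteq> set P" by (rule set_drop_subset)
  have s2: "set R \<subseteq> set Q" unfolding R_def using set_drop_subset by simp
  have distL: "distinct L" unfolding L_def distinct_append set_append
    using d1 d2 mid(1) mid(2) disj s1 s2 by blast
  have closeL: "{last L, hd L} \<in> E"
  proof -
    have "last L = Q ! Suc a" using lastR R_ne by (simp add: L_def)
    moreover have "hd L = Q ! a" using hddP dP_ne Pa by (simp add: L_def)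
    moreover have "{Q ! a, Q ! Suc a} \<in> E" using Q(1,3) ak' by (auto simp: walk_def)
    ultimately show ?thesis by (simp add: insert_commute)
  qed
  have "has_cycle V E" unfolding has_cycle_def using walkL lenL distL closeL by blast
  then show False using tr by (simp add: tree_def)
qed

lemma shortest_props:
  assumes "tree V E" "v \<in> V" "x \<in> V"
  obtains P where "walk V E P" "hd P = v" "last P = x" "length P = Suc (dist V E v x)"
    "\<forall>i<Suc (dist V E v x). dist V E v (P ! i) = i"
proof -
  obtain P where P: "walk V E P" "hd P = v" "last P = x" "length P = Suc (dist V E v x)"
    using dist_ex[OF assms] by blast
  have "\<forall>i<Suc (dist V E v x). dist V E v (P ! i) = i"
    using shortest_nth[OF assms(1,2) P(1,2)] P(3,4) by simp
  with P show ?thesis using that by blast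
qed

lemma dist_adj_ne:
  assumes tr: "tree V E" and vV: "v \<in> V" and e: "{x,y} \<in> E"
  shows "dist V E v x \<noteq> dist V E v y"
proof
  assume eq: "dist V E v x = dist V E v y"
  have g: "graph V E" using tr by (simp add: tree_def)
  from graph_edge[OF g e] have xy: "x \<in> V" "y \<in> V" "x \<noteq> y" by auto
  obtain P where P: "walk V E P" "hd P = v" "last P = x" "length P = Suc (dist V E v x)"
    "\<forall>i<Suc (dist V E v x). dist V E v (P ! i) = i" using shortest_props[OF tr vV xy(1)] by blast
  obtain Q where Q: "walk V E Q" "hd Q = v" "last Q = y" "length Q = Suc (dist V E v y)"
    "\<forall>i<Suc (dist V E v y). dist V E v (Q ! i) = i" using shortest_props[OF tr vV xy(2)] by blast
  show False
    by (rule cycle_contra[OF tr vV P(1,2,4,5) Q(1,2), where mid="[]"]) (use Q eq P xy e in auto)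
qed

lemma dist_adj:
  assumes tr: "tree V E" and vV: "v \<in> V" and e: "{x,y} \<in> E"
  shows "dist V E v y = Suc (dist V E v x) \<or> dist V E v x = Suc (dist V E v y)"
  using dist_adj_ne[OF assms] dist_edge[OF assms] dist_edge[OF tr vV, of y x] e
  by (auto simp: insert_commute)

lemma unique_parent:
  assumes tr: "tree V E" and vV: "v \<in> V" and e1: "{x,y} \<in> E" and e2: "{x,z} \<in> E"
    and le: "dist V E v y \<le> dist V E v x" "dist V E v z \<le> dist V E v x"
  shows "y = z"
proof (rule ccontr)
  assume yz: "y \<noteq> z"
  have g: "graph V E" using tr by (simp add: tree_def)
  from graph_edge[OF g e1] graph_edge[OF g e2] have V: "x \<in> V" "y \<in> V" "z \<in> V" by auto
  have dy: "dist V E v x = Suc (dist V E v y)" using dist_adj[OF tr vV e1] le by auto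
  have dz: "dist V E v x = Suc (dist V E v z)" using dist_adj[OF tr vV e2] le by auto
  obtain P where P: "walk V E P" "hd P = v" "last P = y" "length P = Suc (dist V E v y)"
    "\<forall>i<Suc (dist V E v y). dist V E v (P ! i) = i" using shortest_props[OF tr vV V(2)] by blast
  obtain Q where Q: "walk V E Q" "hd Q = v" "last Q = z" "length Q = Suc (dist V E v z)"
    "\<forall>i<Suc (dist V E v z). dist V E v (Q ! i) = i" using shortest_props[OF tr vV V(3)] by blast
  have xP: "x \<notin> set P"
  proof
    assume "x \<in> set P"
    then obtain i where "i < length P" "P ! i = x" by (auto simp: in_set_conv_nth)
    then show False using P(4,5) dy by auto
  qed
  have xQ: "x \<notin> set Q"
  proof
    assume "x \<in> set Q"
    then obtain i where "i < length Q" "Q ! i = x" by (auto simp: in_set_conv_nth)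
    then show False using Q(4,5) dz by auto
  qed
  show False
    by (rule cycle_contra[OF tr vV P(1,2,4,5) Q(1,2), where mid="[x]"])
       (use Q dy dz P yz e1 e2 xP xQ V in \<open>auto simp: insert_commute\<close>)
qed

lemma dist_zero:
  assumes "tree V E" "v \<in> V" "x \<in> V" "dist V E v x = 0"
  shows "x = v"
proof -
  obtain P where P: "walk V E P" "hd P = v" "last P = x" "length P = Suc (dist V E v x)"
    using dist_ex[OF assms(1-3)] by blast
  then show ?thesis using assms(4) by (cases P) auto
qed

lemma dist_self: "v \<in> V \<Longrightarrow> dist V E v v = 0"
  using dist_le[of V E "[v]" v v] by (auto simp: walk_def)

lemma dist_one:
  assumes "tree V E" "v \<in> V" "x \<in> V" "dist V E v x = 1"
  shows "{v,x} \<in> E"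
proof -
  obtain P where P: "walk V E P" "hd P = v" "last P = x" "length P = Suc (dist V E v x)"
    using dist_ex[OF assms(1-3)] by blast
  then obtain a b where "P = [a,b]" using assms(4)
    by (metis One_nat_def length_0_conv length_Suc_conv)
  then show ?thesis using P by (auto simp: walk_def)
qed

definition cadj :: "'a set \<Rightarrow> 'a set set \<Rightarrow> ('a \<Rightarrow> nat) \<Rightarrow> ('a \<Rightarrow> nat) \<Rightarrow> bool" where
  "cadj V E f g \<longleftrightarrow> proper3 V E f \<and> proper3 V E g \<and> col_adj V f g"

lemma third_colour: "\<exists>c::nat. c < 3 \<and> c \<noteq> a \<and> c \<noteq> b"
  by (rule exI[of _ "if a \<noteq> 0 \<and> b \<noteq> 0 then 0 else if a \<noteq> 1 \<and> b \<noteq> 1 then 1 else 2"]) auto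

lemma proper_ext:
  assumes g: "graph V E" and x: "x \<in> V" and pr: "proper3 (V - {x}) {e\<in>E. x \<notin> e} h"
    and c: "c < 3" "\<forall>y. {x,y} \<in> E \<longrightarrow> c \<noteq> h y"
  shows "proper3 V E (h(x:=c))"
  unfolding proper3_def
proof (intro conjI allI impI ballI)
  fix w assume "w \<in> V" then show "(h(x:=c)) w < 3" using pr c by (auto simp: proper3_def)
next
  fix w assume "w \<notin> V" then show "(h(x:=c)) w = 0" using pr x by (auto simp: proper3_def)
next
  fix a b assume e: "{a,b} \<in> E"
  have ab: "a \<noteq> b" using graph_edge[OF g e] by simp
  show "(h(x:=c)) a \<noteq> (h(x:=c)) b"
  proof (cases "a = x \<or> b = x")
    case True
    then show ?thesis using ab c(2) e by (auto simp: insert_commute)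
  next
    case False
    then have "{a,b} \<in> {e\<in>E. x \<notin> e}" using e by auto
    then show ?thesis using pr False by (auto simp: proper3_def)
  qed
qed

lemma col_adj_x:
  assumes "x \<in> V" "c \<noteq> c'"
  shows "col_adj V (h(x:=c)) (h(x:=c'))"
proof -
  have "{w\<in>V. (h(x:=c)) w \<noteq> (h(x:=c')) w} = {x}" using assms by auto
  then show ?thesis by (simp add: col_adj_def)
qed

lemma col_adj_lift:
  assumes "x \<in> V" "col_adj (V - {x}) g1 g2"
  shows "col_adj V (g1(x:=c)) (g2(x:=c))"
proof -
  have "{w\<in>V. (g1(x:=c)) w \<noteq> (g2(x:=c)) w} = {w\<in>V - {x}. g1 w \<noteq> g2 w}" using assms by auto
  then show ?thesis using assms by (simp add: col_adj_def)
qed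

lemma lift_walk:
  assumes g: "graph V E" and x: "x \<in> V"
    and N1: "\<forall>y z. {x,y} \<in> E \<longrightarrow> {x,z} \<in> E \<longrightarrow> y = z"
    and r: "(cadj (V - {x}) {e\<in>E. x \<notin> e})\<^sup>*\<^sup>* f' g'"
    and pf: "proper3 (V - {x}) {e\<in>E. x \<notin> e} f'"
    and c: "c < 3" "\<forall>y. {x,y} \<in> E \<longrightarrow> c \<noteq> f' y"
  shows "\<exists>c'. c' < 3 \<and> (\<forall>y. {x,y} \<in> E \<longrightarrow> c' \<noteq> g' y) \<and> (cadj V E)\<^sup>*\<^sup>* (f'(x:=c)) (g'(x:=c'))"
  using r
proof (induction rule: rtranclp_induct)
  case base
  then show ?case using c by blast
next
  case (step g1 g2)
  from step.IH obtain c1 where c1: "c1 < 3" "\<forall>y. {x,y} \<in> E \<longrightarrow> c1 \<noteq> g1 y"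
    "(cadj V E)\<^sup>*\<^sup>* (f'(x:=c)) (g1(x:=c1))" by blast
  have p1: "proper3 (V - {x}) {e\<in>E. x \<notin> e} g1" and p2: "proper3 (V - {x}) {e\<in>E. x \<notin> e} g2"
    and ad: "col_adj (V - {x}) g1 g2" using step.hyps(2) by (auto simp: cadj_def)
  obtain c2 where c2: "c2 < 3" "\<forall>y. {x,y} \<in> E \<longrightarrow> c2 \<noteq> g1 y \<and> c2 \<noteq> g2 y"
  proof (cases "\<exists>y. {x,y} \<in> E")
    case True
    then obtain p where p: "{x,p} \<in> E" by blast
    obtain c2 where "c2 < 3" "c2 \<noteq> g1 p" "c2 \<noteq> g2 p" using third_colour by blast
    then show ?thesis using that p N1 by metis
  next
    case False
    then show ?thesis using that[of 0] by auto
  qed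
  have P1: "proper3 V E (g1(x:=c1))" using proper_ext[OF g x p1 c1(1,2)] .
  have P2: "proper3 V E (g1(x:=c2))" using proper_ext[OF g x p1 c2(1)] c2(2) by blast
  have P3: "proper3 V E (g2(x:=c2))" using proper_ext[OF g x p2 c2(1)] c2(2) by blast
  have s1: "(cadj V E)\<^sup>*\<^sup>* (g1(x:=c1)) (g1(x:=c2))"
  proof (cases "c1 = c2")
    case False
    then show ?thesis using P1 P2 col_adj_x[OF x False] by (auto simp: cadj_def)
  qed simp
  have s2: "cadj V E (g1(x:=c2)) (g2(x:=c2))" using P2 P3 col_adj_lift[OF x ad] by (simp add: cadj_def)
  have "(cadj V E)\<^sup>*\<^sup>* (f'(x:=c)) (g2(x:=c2))" using c1(3) s1 s2 by (meson rtranclp.rtrancl_into_rtrancl rtranclp_trans)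
  then show ?case using c2 by blast
qed

lemma conn:
  assumes "graph V E"
    and "\<forall>x y z. {x,y} \<in> E \<longrightarrow> {x,z} \<in> E \<longrightarrow> d y \<le> (d x::nat) \<longrightarrow> d z \<le> d x \<longrightarrow> y = z"
    and "proper3 V E f" "proper3 V E g"
  shows "(cadj V E)\<^sup>*\<^sup>* f g"
  using assms
proof (induction "card V" arbitrary: V E f g)
  case 0
  then have "V = {}" by (simp add: graph_def)
  then have "f = g" using 0 by (auto simp: proper3_def)
  then show ?case by simp
next
  case (Suc m)
  have fin: "finite V" using Suc.prems by (simp add: graph_def)
  have ne: "V \<noteq> {}" using Suc.hyps(2) by auto
  have "Max (d ` V) \<in> d ` V" using fin ne by (intro Max_in) auto
  then obtain x where x: "x \<in> V" "d x = Max (d ` V)" by (metis imageE)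
  have xmax: "d y \<le> d x" if "y \<in> V" for y using x fin that by simp
  have N1: "\<forall>y z. {x,y} \<in> E \<longrightarrow> {x,z} \<in> E \<longrightarrow> y = z"
    using Suc.prems(2) graph_edge[OF Suc.prems(1)] xmax by blast
  define V' where "V' = V - {x}"
  define E' where "E' = {e\<in>E. x \<notin> e}"
  have gV': "graph V' E'" using Suc.prems(1) fin unfolding graph_def V'_def E'_def by blast
  have cV': "m = card V'" using Suc.hyps(2) x fin by (simp add: V'_def)
  have pr': "\<forall>a y z. {a,y} \<in> E' \<longrightarrow> {a,z} \<in> E' \<longrightarrow> d y \<le> d a \<longrightarrow> d z \<le> d a \<longrightarrow> y = z"
    using Suc.prems(2) by (auto simp: E'_def)
  have restr: "proper3 V' E' (h(x:=0))" if "proper3 V E h" for h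
    using that by (auto simp: proper3_def V'_def E'_def)
  have IH: "(cadj V' E')\<^sup>*\<^sup>* (f(x:=0)) (g(x:=0))"
    using Suc.hyps(1)[OF cV' gV' pr' restr[OF Suc.prems(3)] restr[OF Suc.prems(4)]] .
  have nx: "{x} \<notin> E" using graph_edge[OF Suc.prems(1), of x x] by auto
  have fx: "f x < 3" "\<forall>y. {x,y} \<in> E \<longrightarrow> f x \<noteq> (f(x:=0)) y"
    using Suc.prems(3) x nx by (auto simp: proper3_def)
  obtain c' where c': "c' < 3" "\<forall>y. {x,y} \<in> E \<longrightarrow> c' \<noteq> (g(x:=0)) y"
    "(cadj V E)\<^sup>*\<^sup>* ((f(x:=0))(x:=f x)) ((g(x:=0))(x:=c'))"
    using lift_walk[OF Suc.prems(1) x(1) N1 IH[unfolded V'_def E'_def] restr[OF Suc.prems(3), unfolded V'_def E'_def] fx]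
    by blast
  have ff: "(f(x:=0))(x:=f x) = f" by simp
  have gg: "(g(x:=0))(x:=g x) = g" by simp
  have pg': "proper3 V E ((g(x:=0))(x:=c'))"
    using proper_ext[OF Suc.prems(1) x(1) restr[OF Suc.prems(4), unfolded V'_def E'_def] c'(1,2)] .
  have last: "(cadj V E)\<^sup>*\<^sup>* ((g(x:=0))(x:=c')) g"
  proof (cases "c' = g x")
    case True then show ?thesis by simp
  next
    case False
    then show ?thesis using pg' Suc.prems(4) col_adj_x[OF x(1) False, of "g(x:=0)"] gg
      by (auto simp: cadj_def)
  qed
  show ?case using c'(3) last ff by (metis rtranclp_trans)
qed

lemma rtranclp_walk:
  assumes "(cadj V E)\<^sup>*\<^sup>* f g" "proper3 V E f"
  shows "\<exists>p. walk (colourings V E) (col_graph_edges V E) p \<and> hd p = f \<and> last p = g"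
  using assms(1)
proof (induction rule: rtranclp_induct)
  case base
  then show ?case using assms(2) by (intro exI[of _ "[f]"]) (auto simp: walk_def colourings_def)
next
  case (step g1 g2)
  then obtain p where p: "walk (colourings V E) (col_graph_edges V E) p" "hd p = f" "last p = g1" by blast
  have "{g1, g2} \<in> col_graph_edges V E" using step.hyps(2)
    unfolding col_graph_edges_def cadj_def colourings_def by blast
  moreover have "g2 \<in> colourings V E" using step.hyps(2) by (simp add: cadj_def colourings_def)
  ultimately have "walk (colourings V E) (col_graph_edges V E) (p @ [g2])"
    using walk_snoc[OF p(1)] p(3) by simp
  moreover have "hd (p @ [g2]) = f" using p by (cases p) (auto simp: walk_def)
  ultimately show ?case by (intro exI[of _ "p @ [g2]"]) simp
qed

lemma mod3_a: "(x::int) \<noteq> y mod 3 \<Longrightarrow> 0 \<le> x \<Longrightarrow> x < 3 \<Longrightarrow> x \<noteq> (y - 1) mod 3 \<Longrightarrow> x = (y + 1) mod 3"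
  by presburger
lemma mod3_b: "s = 1 \<or> s = -1 \<Longrightarrow> \<bar>z - b\<bar> = 1 \<Longrightarrow> b mod 3 \<noteq> (z - s) mod 3 \<Longrightarrow> \<bar>z + 2*s - b\<bar> = (1::int)"
proof -
  assume a: "s = 1 \<or> s = -1" "\<bar>z - b\<bar> = 1" "b mod 3 \<noteq> (z - s) mod 3"
  have "b = z + 1 \<or> b = z - 1" using a(2) by (auto simp: abs_if split: if_splits)
  then show ?thesis using a(1,3) by (elim disjE) auto
qed
lemma mod3_c: "s = 1 \<or> s = -1 \<Longrightarrow> (z - s) mod 3 = (z + 2*s) mod (3::int)"
proof -
  have "z + 2*s = (z - s) + 3 * s" by simp
  then show ?thesis by (metis mod_mult_self2)
qed
lemma mod3_d: "\<bar>(a::int) - b\<bar> = 1 \<Longrightarrow> a mod 3 \<noteq> b mod 3"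
  by presburger

definition Inv :: "'a set \<Rightarrow> 'a set set \<Rightarrow> ('a \<Rightarrow> int) \<Rightarrow> ('a \<Rightarrow> nat) \<Rightarrow> nat \<Rightarrow> bool" where
  "Inv V E H0 f k \<longleftrightarrow> (\<exists>H::'a \<Rightarrow> int. (\<forall>a b. {a,b} \<in> E \<longrightarrow> \<bar>H a - H b\<bar> = 1)
     \<and> (\<forall>y\<in>V. int (f y) = H y mod 3) \<and> (\<forall>y\<in>V. even (H y - H0 y))
     \<and> (\<Sum>y\<in>V. \<bar>H y - H0 y\<bar>) \<le> 2 * int k)"

lemma col_adj_sym: "col_adj V f g \<Longrightarrow> col_adj V g f"
proof -
  assume a: "col_adj V f g"
  have "{v\<in>V. g v \<noteq> f v} = {v\<in>V. f v \<noteq> g v}" by auto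
  then show ?thesis using a by (simp add: col_adj_def)
qed

lemma inv_step:
  assumes g: "graph V E" and I: "Inv V E H0 f k" and pf: "proper3 V E f" and pg: "proper3 V E g"
    and ad: "col_adj V f g"
  shows "Inv V E H0 g (Suc k)"
proof -
  have fin: "finite V" using g by (simp add: graph_def)
  obtain H where H: "\<forall>a b. {a,b} \<in> E \<longrightarrow> \<bar>H a - H b\<bar> = 1" "\<forall>y\<in>V. int (f y) = H y mod 3"
    "\<forall>y\<in>V. even (H y - H0 y)" "(\<Sum>y\<in>V. \<bar>H y - H0 y\<bar>) \<le> 2 * int k"
    using I unfolding Inv_def by blast
  obtain z where z: "{w\<in>V. f w \<noteq> g w} = {z}" using ad unfolding col_adj_def by (rule card_1_singletonE)
  have zV: "z \<in> V" and fgz: "f z \<noteq> g z" using z by auto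
  have same: "f w = g w" if "w \<in> V" "w \<noteq> z" for w using z that by blast
  define s :: int where "s = (if int (g z) = (H z - 1) mod 3 then 1 else -1)"
  have s1: "s = 1 \<or> s = -1" by (simp add: s_def)
  have gz3: "g z < 3" using pg zV by (simp add: proper3_def)
  have fz: "int (f z) = H z mod 3" using H(2) zV by simp
  have gz: "int (g z) = (H z - s) mod 3"
  proof -
    have a: "int (g z) \<noteq> H z mod 3" using fz fgz by simp
    have b: "0 \<le> int (g z)" "int (g z) < 3" using gz3 by auto
    show ?thesis unfolding s_def using mod3_a[OF a b] by auto
  qed
  define H' where "H' = H(z := H z + 2 * s)"
  have h1: "\<forall>a b. {a,b} \<in> E \<longrightarrow> \<bar>H' a - H' b\<bar> = 1"
  proof (intro allI impI)
    fix a b assume e: "{a,b} \<in> E"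
    have ab: "a \<in> V" "b \<in> V" "a \<noteq> b" using graph_edge[OF g e] by auto
    have gab: "g a \<noteq> g b" using pg e by (simp add: proper3_def)
    show "\<bar>H' a - H' b\<bar> = 1"
    proof (cases "a = z")
      case True
      have "H b mod 3 \<noteq> (H z - s) mod 3" using gz gab True same[OF ab(2)] ab H(2) by auto
      moreover have "\<bar>H z - H b\<bar> = 1" using H(1) e True by auto
      ultimately show ?thesis using True ab(3) mod3_b[OF s1] unfolding H'_def by auto
    next
      case False
      show ?thesis
      proof (cases "b = z")
        case True
        have "H a mod 3 \<noteq> (H z - s) mod 3" using gz gab True same[OF ab(1)] ab H(2) False by auto
        moreover have "\<bar>H a - H z\<bar> = 1" using H(1) e True by auto
        ultimately have "\<bar>H z + 2 * s - H a\<bar> = 1" using mod3_b[OF s1] by (simp add: abs_minus_commute)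
        then show ?thesis using True False unfolding H'_def by (simp add: abs_minus_commute)
      next
        case False
        then show ?thesis using \<open>a \<noteq> z\<close> H(1) e unfolding H'_def by auto
      qed
    qed
  qed
  have h2: "\<forall>y\<in>V. int (g y) = H' y mod 3"
  proof
    fix y assume y: "y \<in> V"
    show "int (g y) = H' y mod 3"
    proof (cases "y = z")
      case True
      then show ?thesis using gz mod3_c[OF s1] unfolding H'_def by auto
    next
      case False
      then show ?thesis using same[OF y] H(2) y unfolding H'_def by auto
    qed
  qed
  have h3: "\<forall>y\<in>V. even (H' y - H0 y)" using H(3) unfolding H'_def by auto
  have h4: "(\<Sum>y\<in>V. \<bar>H' y - H0 y\<bar>) \<le> 2 * int (Suc k)"
  proof -
    have "(\<Sum>y\<in>V. \<bar>H' y - H0 y\<bar>) = \<bar>H' z - H0 z\<bar> + (\<Sum>y\<in>V - {z}. \<bar>H' y - H0 y\<bar>)"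
      using sum.remove[OF fin zV, of "\<lambda>y. \<bar>H' y - H0 y\<bar>"] by simp
    also have "(\<Sum>y\<in>V - {z}. \<bar>H' y - H0 y\<bar>) = (\<Sum>y\<in>V - {z}. \<bar>H y - H0 y\<bar>)"
      unfolding H'_def by (intro sum.cong) auto
    also have "\<bar>H' z - H0 z\<bar> \<le> \<bar>H z - H0 z\<bar> + 2" using s1 unfolding H'_def by auto
    finally have "(\<Sum>y\<in>V. \<bar>H' y - H0 y\<bar>) \<le> \<bar>H z - H0 z\<bar> + (\<Sum>y\<in>V - {z}. \<bar>H y - H0 y\<bar>) + 2"
      by simp
    also have "\<bar>H z - H0 z\<bar> + (\<Sum>y\<in>V - {z}. \<bar>H y - H0 y\<bar>) = (\<Sum>y\<in>V. \<bar>H y - H0 y\<bar>)"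
      using sum.remove[OF fin zV, of "\<lambda>y. \<bar>H y - H0 y\<bar>"] by simp
    finally show ?thesis using H(4) by simp
  qed
  show ?thesis unfolding Inv_def using h1 h2 h3 h4 by blast
qed

lemma inv_walk:
  assumes g: "graph V E"
  shows "walk (colourings V E) (col_graph_edges V E) p \<Longrightarrow> Inv V E H0 (hd p) 0
    \<Longrightarrow> Inv V E H0 (last p) (length p - 1)"
proof (induction p rule: rev_induct)
  case Nil
  then show ?case by (simp add: walk_def)
next
  case (snoc b p)
  show ?case
  proof (cases "p = []")
    case True
    then show ?thesis using snoc by simp
  next
    case False
    from walk_butlast[OF snoc.prems(1) False] have w: "walk (colourings V E) (col_graph_edges V E) p"
      and e: "{last p, b} \<in> col_graph_edges V E" by auto
    have "Inv V E H0 (last p) (length p - 1)" using snoc.IH[OF w] snoc.prems(2) False by simp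
    moreover obtain f1 g1 where fg: "{last p, b} = {f1, g1}" "f1 \<in> colourings V E" "g1 \<in> colourings V E"
      "col_adj V f1 g1" using e unfolding col_graph_edges_def by blast
    then have "proper3 V E (last p) \<and> proper3 V E b \<and> col_adj V (last p) b"
      by (auto simp: doubleton_eq_iff colourings_def intro: col_adj_sym)
    ultimately have "Inv V E H0 b (Suc (length p - 1))" using inv_step[OF g] by blast
    then show ?thesis using False by simp
  qed
qed

lemma const_walk:
  assumes "walk V E p" "\<forall>a b. {a,b} \<in> E \<longrightarrow> F a = F b"
  shows "F (last p) = F (hd p)"
proof -
  have "\<forall>i<length p. F (p ! i) = F (p ! 0)"
  proof (intro allI impI)
    fix i assume "i < length p"
    then show "F (p ! i) = F (p ! 0)"
    proof (induction i)
      case (Suc i)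
      then have e: "{p ! i, p ! Suc i} \<in> E" using assms(1) unfolding walk_def by blast
      have "F (p ! i) = F (p ! Suc i)" using assms(2) e by blast
      moreover have "F (p ! i) = F (p ! 0)" using Suc.IH Suc.prems by simp
      ultimately show ?case by simp
    qed simp
  qed
  moreover have ne: "p \<noteq> []" using assms(1) by (simp add: walk_def)
  ultimately have "F (p ! (length p - 1)) = F (p ! 0)" by (meson diff_less length_greater_0_conv zero_less_one)
  then show ?thesis using ne by (simp add: last_conv_nth hd_conv_nth del: One_nat_def)
qed

lemma heightcol:
  assumes g: "graph V E" and h: "\<forall>a b. {a,b} \<in> E \<longrightarrow> \<bar>h a - h b\<bar> = (1::int)"
  shows "proper3 V E (\<lambda>x. if x \<in> V then nat (h x mod 3) else 0)"
proof -
  have "nat (h a mod 3) \<noteq> nat (h b mod 3)" if e: "{a,b} \<in> E" for a b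
  proof -
    have "\<bar>h a - h b\<bar> = 1" using h e by blast
    then have "h a mod 3 \<noteq> h b mod 3" by (rule mod3_d)
    then show ?thesis by (simp add: nat_eq_iff2)
  qed
  then show ?thesis using graph_edge[OF g] unfolding proper3_def by auto
qed


lemma mod3_e:
  assumes "\<bar>(p::int) - q\<bar> = 1" "\<bar>r - s\<bar> = 1" "p mod 3 = r mod 3" "q mod 3 = s mod 3"
  shows "p - r = q - s"
proof -
  have "3 dvd (p - r)" "3 dvd (q - s)" using assms(3,4) by (simp_all add: mod_eq_dvd_iff)
  then have d: "3 dvd ((p - r) - (q - s))" by (rule dvd_diff)
  have pq: "p - q = 1 \<or> p - q = -1" using assms(1) by (cases "p - q \<ge> 0") auto
  have rs: "r - s = 1 \<or> r - s = -1" using assms(2) by (cases "r - s \<ge> 0") auto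
  have e: "(p - r) - (q - s) = (p - q) - (r - s)" by simp
  show ?thesis
  proof (rule ccontr)
    assume ne: "p - r \<noteq> q - s"
    then have "(p - q) - (r - s) = 2 \<or> (p - q) - (r - s) = -2" using pq rs by auto
    then show False using d e by auto
  qed
qed

lemma six: "(c::int) mod 3 = 0 \<Longrightarrow> even c \<Longrightarrow> c = 6 * (c div 6)"
proof -
  assume a: "c mod 3 = 0" "even c"
  then obtain k where k: "c = 2 * k" by (auto elim: evenE)
  have "3 dvd 2 * k" using a k by auto
  then have "3 dvd k" by presburger
  then obtain j where "k = 3 * j" by (auto elim: dvdE)
  then show ?thesis using k by simp
qed

lemma ceil_half: "\<lceil>real n / 2\<rceil> = int ((n + 1) div 2)"
proof (cases "even n")
  case True
  then obtain m where "n = 2 * m" by (auto elim: evenE)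
  then show ?thesis by simp
next
  case False
  then obtain m where m: "n = 2 * m + 1" by (auto elim: oddE)
  have "real n / 2 = real m + 1/2" using m by (simp add: field_simps)
  then have "\<lceil>real n / 2\<rceil> = int m + 1" by (simp add: ceiling_eq_iff) 
  then show ?thesis using m by simp
qed


lemma exists_upper:
  fixes d :: "'a \<Rightarrow> nat"
  assumes "finite R"
  shows "k \<le> card R \<Longrightarrow> \<exists>S\<subseteq>R. card S = k \<and> (\<forall>x\<in>S. \<forall>y\<in>R. d x < d y \<longrightarrow> y \<in> S)"
proof (induction k)
  case 0
  then show ?case by (intro exI[of _ "{}"]) auto
next
  case (Suc k)
  then obtain S where S: "S \<subseteq> R" "card S = k" "\<forall>x\<in>S. \<forall>y\<in>R. d x < d y \<longrightarrow> y \<in> S" by auto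
  have finS: "finite S" using S(1) assms finite_subset by blast
  have "R - S \<noteq> {}"
  proof
    assume "R - S = {}"
    then have "R = S" using S(1) by blast
    then show False using S(2) Suc.prems by simp
  qed
  then have "Max (d ` (R - S)) \<in> d ` (R - S)" using assms by (intro Max_in) auto
  then obtain y0 where y0: "y0 \<in> R - S" "d y0 = Max (d ` (R - S))" by (metis imageE)
  have y0max: "d y \<le> d y0" if "y \<in> R - S" for y using y0 assms that by simp
  show ?case
  proof (intro exI[of _ "insert y0 S"] conjI)
    show "insert y0 S \<subseteq> R" using S y0 by auto
    show "card (insert y0 S) = Suc k" using S y0 finS by simp
    show "\<forall>x\<in>insert y0 S. \<forall>y\<in>R. d x < d y \<longrightarrow> y \<in> insert y0 S"
    proof (intro ballI impI)
      fix x y assume x: "x \<in> insert y0 S" and y: "y \<in> R" and lt: "d x < d y"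
      show "y \<in> insert y0 S"
      proof (cases "x \<in> S")
        case True then show ?thesis using S(3) y lt by blast
      next
        case False
        then have "x = y0" using x by blast
        show ?thesis
        proof (rule ccontr)
          assume "y \<notin> insert y0 S"
          then have "d y \<le> d y0" using y0max y by blast
          then show False using lt \<open>x = y0\<close> by simp
        qed
      qed
    qed
  qed
qed


lemma absl1: "(t::int) \<ge> 0 \<Longrightarrow> D \<ge> -1 \<Longrightarrow> \<bar>D\<bar> \<le> \<bar>D + 3 * t\<bar>"
  by (cases "t = 0") (auto simp: abs_if)

lemma absl2: "(t::int) < 0 \<Longrightarrow> D \<le> 2 \<Longrightarrow> 3 - D \<le> \<bar>D + 3 * t\<bar>"
  by (simp add: abs_if)

lemma sum_lower:
  fixes D :: "'a \<Rightarrow> int" and d :: "'a \<Rightarrow> nat"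
  assumes fin: "finite V"
    and Dd: "\<forall>x\<in>V. D x = (if d x = 0 then -1 else if d x = 1 then 0 else if x \<in> S then 2 else 1)"
    and SV: "S \<subseteq> V" and S3: "\<forall>x\<in>S. 3 \<le> d x"
    and c0: "card {x\<in>V. d x = 0} = 1" and c1: "card {x\<in>V. d x = 1} = 1"
    and cS: "card S = n div 2 + 2" and cV: "card V = n"
  shows "int (3 * n div 2 + 1) \<le> (\<Sum>x\<in>V. \<bar>D x + 3 * t\<bar>)"
proof -
  have "{x\<in>V. d x = 0} \<noteq> {}" using c0 by (metis card.empty zero_neq_one)
  then have "V \<noteq> {}" by blast
  then have "0 < card V" using fin by (simp add: card_gt_0_iff)
  then have n1: "n \<ge> 1" using cV by simp
  have e1: "(\<Sum>x\<in>V. (of_bool (d x = Suc 0) :: int)) = 1"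
  proof -
    have "(\<Sum>x\<in>V. (of_bool (d x = Suc 0)::int)) = of_nat (card (V \<inter> {x. d x = Suc 0}))"
      by (rule sum_of_bool_eq) (rule fin)+
    also have "V \<inter> {x. d x = Suc 0} = {x\<in>V. d x = 1}" by auto
    finally show ?thesis using c1 by simp
  qed
  have e0: "(\<Sum>x\<in>V. (of_bool (d x = 0) :: int)) = 1"
  proof -
    have "(\<Sum>x\<in>V. (of_bool (d x = 0)::int)) = of_nat (card (V \<inter> {x. d x = 0}))"
      by (rule sum_of_bool_eq) (rule fin)+
    also have "V \<inter> {x. d x = 0} = {x\<in>V. d x = 0}" by auto
    finally show ?thesis using c0 by simp
  qed
  have eS: "(\<Sum>x\<in>V. (of_bool (x \<in> S) :: int)) = int (n div 2 + 2)"
  proof -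
    have "V \<inter> {x. x \<in> S} = S" using SV by auto
    moreover have "(\<Sum>x\<in>V. (of_bool (x \<in> S)::int)) = of_nat (card (V \<inter> {x. x \<in> S}))"
      by (rule sum_of_bool_eq) (rule fin)+
    ultimately show ?thesis using cS by simp
  qed
  have eV: "(\<Sum>x\<in>V. (1::int)) = int n" using cV by simp
  show ?thesis
  proof (cases "t \<ge> 0")
    case True
    have pw: "1 - of_bool (d x = 1) + of_bool (x \<in> S) \<le> \<bar>D x + 3 * t\<bar>" if "x \<in> V" for x
    proof -
      have "1 - of_bool (d x = 1) + of_bool (x \<in> S) = \<bar>D x\<bar>" "D x \<ge> -1"
        using Dd that S3 by (cases "d x = 0"; cases "d x = 1"; cases "x \<in> S"; fastforce)+
      then show ?thesis using absl1[OF True] by simp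
    qed
    have "(\<Sum>x\<in>V. 1 - of_bool (d x = 1) + of_bool (x \<in> S)) \<le> (\<Sum>x\<in>V. \<bar>D x + 3 * t\<bar>)"
      by (rule sum_mono) (use pw in auto)
    moreover have "(\<Sum>x\<in>V. 1 - of_bool (d x = 1) + of_bool (x \<in> S)) = int n - 1 + int (n div 2 + 2)"
      by (simp add: sum.distrib sum_subtractf e1 eS eV cV)
    ultimately show ?thesis using n1 by linarith
  next
    case False
    have pw: "2 + 2 * of_bool (d x = 0) + of_bool (d x = 1) - of_bool (x \<in> S) \<le> \<bar>D x + 3 * t\<bar>" if "x \<in> V" for x
    proof -
      have "2 + 2 * of_bool (d x = 0) + of_bool (d x = 1) - of_bool (x \<in> S) = 3 - D x" "D x \<le> 2"
        using Dd that S3 by (cases "d x = 0"; cases "d x = 1"; cases "x \<in> S"; fastforce)+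
      then show ?thesis using absl2 False by simp
    qed
    have "(\<Sum>x\<in>V. 2 + 2 * of_bool (d x = 0) + of_bool (d x = 1) - of_bool (x \<in> S)) \<le> (\<Sum>x\<in>V. \<bar>D x + 3 * t\<bar>)"
      by (rule sum_mono) (use pw in auto)
    moreover have "(\<Sum>x\<in>V. 2 + 2 * of_bool (d x = 0) + of_bool (d x = 1) - of_bool (x \<in> S)) = 2 * int n + 2 + 1 - int (n div 2 + 2)"
      by (simp add: sum.distrib sum_subtractf e1 e0 eS eV cV sum_distrib_left[symmetric])
    ultimately show ?thesis by linarith
  qed
qed

theorem mainTheorem12:
  fixes V :: "'a set" and E :: "'a set set" and v :: 'a and n :: nat
  assumes "tree V E"
    and "n = card V"
    and "leaf V E v"
    and "int (card (sphere V E 2 v)) \<le> \<lceil>real n / 2\<rceil> - 4"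
  shows "diam (colourings V E) (col_graph_edges V E) \<ge> (3 * n) div 2 + 1"
proof -
  note tr = assms(1)
  have g: "graph V E" using tr by (simp add: tree_def)
  have fin: "finite V" using g by (simp add: graph_def)
  have vV: "v \<in> V" using assms(3) by (simp add: leaf_def)
  define d where "d = dist V E v"
  have "card {e\<in>E. v \<in> e} = 1" using assms(3) by (simp add: leaf_def degree_def)
  then obtain e0 where e0: "{e\<in>E. v \<in> e} = {e0}" by (rule card_1_singletonE)
  then have e0E: "e0 \<in> E" "v \<in> e0" by auto
  then obtain a b where ab: "a \<in> V" "b \<in> V" "a \<noteq> b" "e0 = {a,b}" using g unfolding graph_def by blast
  obtain u where u: "e0 = {v,u}" "u \<noteq> v"
    using ab e0E(2) by (metis doubleton_eq_iff insertE singletonD)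
  have uE: "{v,u} \<in> E" using e0E u by simp
  have uV: "u \<in> V" using graph_edge[OF g uE] by simp
  have nbr: "y = u" if "{v,y} \<in> E" for y
  proof -
    have "{v,y} \<in> {e\<in>E. v \<in> e}" using that by simp
    then have "{v,y} = {v,u}" using e0 u by simp
    then show ?thesis by (metis doubleton_eq_iff u(2))
  qed
  have d0: "d x = 0 \<longleftrightarrow> x = v" if "x \<in> V" for x
    using dist_zero[OF tr vV that] dist_self[OF vV] unfolding d_def by auto
  have du: "d u = 1"
  proof -
    have "walk V E [v,u]" using vV uV uE by (simp add: walk_def)
    then have "d u \<le> 1" unfolding d_def using dist_le[of V E "[v,u]" v u] by simp
    moreover have "d u \<noteq> 0" using d0[OF uV] u(2) by simp
    ultimately show ?thesis by simp
  qed
  have d1: "d x = 1 \<longleftrightarrow> x = u" if "x \<in> V" for x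
    using dist_one[OF tr vV that] nbr du unfolding d_def by auto
  define W where "W = {x\<in>V. d x = 2}"
  define R where "R = {x\<in>V. 3 \<le> d x}"
  have WS: "W = sphere V E 2 v" unfolding W_def sphere_def d_def by simp
  have Vdec: "V = insert v (insert u (W \<union> R))"
  proof
    show "V \<subseteq> insert v (insert u (W \<union> R))"
    proof
      fix x assume x: "x \<in> V"
      show "x \<in> insert v (insert u (W \<union> R))"
        using d0[OF x] d1[OF x] x unfolding W_def R_def by (cases "d x = 2") auto
    qed
    show "insert v (insert u (W \<union> R)) \<subseteq> V" using vV uV unfolding W_def R_def by auto
  qed
  have finW: "finite W" and finR: "finite R" using fin unfolding W_def R_def by auto
  have "v \<notin> W \<union> R" "u \<notin> W \<union> R" using d0[OF vV] du unfolding W_def R_def by auto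
  moreover have "W \<inter> R = {}" unfolding W_def R_def by auto
  ultimately have cardV: "n = Suc (Suc (card W + card R))"
    using assms(2) Vdec finW finR u(2) by (simp add: card_Un_disjoint)
  have hypW: "card W + 4 \<le> (n + 1) div 2" using assms(4) WS ceil_half[of n] by simp
  define k0 where "k0 = n div 2 + 2"
  have k0R: "k0 \<le> card R" using cardV hypW unfolding k0_def by linarith
  obtain S where S: "S \<subseteq> R" "card S = k0" "\<forall>x\<in>S. \<forall>y\<in>R. d x < d y \<longrightarrow> y \<in> S"
    using exists_upper[OF finR k0R] by blast
  have SV: "S \<subseteq> V" and S3: "\<forall>x\<in>S. 3 \<le> d x" using S(1) unfolding R_def by auto
  define D :: "'a \<Rightarrow> int" where "D x = (if d x = 0 then -1 else if d x = 1 then 0 else if x \<in> S then 2 else 1)" for x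
  define hb :: "'a \<Rightarrow> int" where "hb x = int (d x) - 1" for x
  define ha :: "'a \<Rightarrow> int" where "ha x = int (d x) - 2 * D x - 1" for x
  have Dstep: "D y = D x \<or> D y = D x + 1" if e: "{x,y} \<in> E" and dd: "d y = Suc (d x)" for x y
  proof -
    have xy: "x \<in> V" "y \<in> V" using graph_edge[OF g e] by auto
    show ?thesis
    proof (cases "d x \<le> 2")
      case True
      then show ?thesis using dd S3 unfolding D_def by auto
    next
      case False
      then have xR: "x \<in> R" and yR: "y \<in> R" using xy dd unfolding R_def by auto
      show ?thesis
      proof (cases "x \<in> S")
        case True
        then have "y \<in> S" using S(3) yR dd by auto
        then show ?thesis using True dd False unfolding D_def by auto
      next
        case False
        then show ?thesis using dd \<open>\<not> d x \<le> 2\<close> unfolding D_def by auto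
      qed
    qed
  qed
  have dadj: "d y = Suc (d x) \<or> d x = Suc (d y)" if "{x,y} \<in> E" for x y
    using dist_adj[OF tr vV that] unfolding d_def by simp
  have ha_h: "\<forall>x y. {x,y} \<in> E \<longrightarrow> \<bar>ha x - ha y\<bar> = 1"
  proof (intro allI impI)
    fix x y assume e: "{x,y} \<in> E"
    have e': "{y,x} \<in> E" using e by (simp add: insert_commute)
    show "\<bar>ha x - ha y\<bar> = 1"
    proof (cases "d y = Suc (d x)")
      case True
      then show ?thesis using Dstep[OF e True] unfolding ha_def by auto
    next
      case False
      then have "d x = Suc (d y)" using dadj[OF e] by simp
      then show ?thesis using Dstep[OF e'] unfolding ha_def by auto
    qed
  qed
  have hb_h: "\<forall>x y. {x,y} \<in> E \<longrightarrow> \<bar>hb x - hb y\<bar> = 1"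
    using dadj unfolding hb_def by fastforce
  define \<alpha> where "\<alpha> x = (if x \<in> V then nat (ha x mod 3) else 0)" for x
  define \<beta> where "\<beta> x = (if x \<in> V then nat (hb x mod 3) else 0)" for x
  have pa: "proper3 V E \<alpha>" unfolding \<alpha>_def by (rule heightcol[OF g ha_h])
  have pb: "proper3 V E \<beta>" unfolding \<beta>_def by (rule heightcol[OF g hb_h])
  have ia: "\<forall>y\<in>V. int (\<alpha> y) = ha y mod 3" unfolding \<alpha>_def by simp
  have ib: "\<forall>y\<in>V. int (\<beta> y) = hb y mod 3" unfolding \<beta>_def by simp
  have uprop: "\<forall>x y z. {x,y} \<in> E \<longrightarrow> {x,z} \<in> E \<longrightarrow> d y \<le> d x \<longrightarrow> d z \<le> d x \<longrightarrow> y = z"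
    using unique_parent[OF tr vV] unfolding d_def by blast
  have "(cadj V E)\<^sup>*\<^sup>* \<alpha> \<beta>" by (rule conn[OF g uprop pa pb])
  then obtain p where p: "walk (colourings V E) (col_graph_edges V E) p" "hd p = \<alpha>" "last p = \<beta>"
    using rtranclp_walk pa by blast
  define C where "C = colourings V E"
  define CE where "CE = col_graph_edges V E"
  define K where "K = dist C CE \<alpha> \<beta>"
  have "length p = Suc (length p - 1)" using p by (cases p) (auto simp: walk_def)
  then have "\<exists>k q. walk C CE q \<and> hd q = \<alpha> \<and> last q = \<beta> \<and> length q = Suc k"
    using p unfolding C_def CE_def by blast
  then have "\<exists>q. walk C CE q \<and> hd q = \<alpha> \<and> last q = \<beta> \<and> length q = Suc K"
    unfolding K_def dist_def by (rule LeastI_ex)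
  then obtain q where q: "walk C CE q" "hd q = \<alpha>" "last q = \<beta>" "length q = Suc K" by blast
  have I0: "Inv V E ha \<alpha> 0" unfolding Inv_def using ha_h ia by (intro exI[of _ ha]) auto
  have "Inv V E ha \<beta> K" using inv_walk[OF g, of q ha] q I0 unfolding C_def CE_def by simp
  then obtain H where H: "\<forall>a b. {a,b} \<in> E \<longrightarrow> \<bar>H a - H b\<bar> = 1" "\<forall>y\<in>V. int (\<beta> y) = H y mod 3"
    "\<forall>y\<in>V. even (H y - ha y)" "(\<Sum>y\<in>V. \<bar>H y - ha y\<bar>) \<le> 2 * int K"
    unfolding Inv_def by blast
  have edgeconst: "\<forall>a b. {a,b} \<in> E \<longrightarrow> H a - hb a = H b - hb b"
  proof (intro allI impI)
    fix a b assume e: "{a,b} \<in> E"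
    have abV: "a \<in> V" "b \<in> V" using graph_edge[OF g e] by auto
    have m1: "\<bar>H a - H b\<bar> = 1" "\<bar>hb a - hb b\<bar> = 1" using H(1) hb_h e by auto
    have m2: "H a mod 3 = hb a mod 3" "H b mod 3 = hb b mod 3" using H(2) ib abV by auto
    show "H a - hb a = H b - hb b" by (rule mod3_e[OF m1 m2])
  qed
  define c where "c = H v - hb v"
  have Hc: "H x - hb x = c" if xV: "x \<in> V" for x
  proof -
    have cg: "connected_graph V E" using tr by (simp add: tree_def)
    obtain w where w: "walk V E w" "hd w = v" "last w = x"
      using cg[unfolded connected_graph_def, rule_format, OF vV xV] by blast
    show ?thesis using const_walk[OF w(1) edgeconst] w unfolding c_def by simp
  qed
  have c3: "c mod 3 = 0" using H(2) ib vV unfolding c_def by (simp add: mod_eq_dvd_iff[symmetric] mod_diff_cong) 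
  have c2: "even c"
  proof -
    have "even (H v - ha v)" using H(3) vV by blast
    moreover have "H v - ha v = c + 2 * D v" unfolding c_def ha_def hb_def by simp
    ultimately show ?thesis by simp
  qed
  define t where "t = c div 6"
  have c6: "c = 6 * t" unfolding t_def by (rule six[OF c3 c2])
  have pt: "\<bar>H x - ha x\<bar> = 2 * \<bar>D x + 3 * t\<bar>" if "x \<in> V" for x
  proof -
    have e: "H x - ha x = 2 * (D x + 3 * t)" using Hc[OF that] c6 unfolding ha_def hb_def by simp
    show ?thesis unfolding e abs_mult by simp
  qed
  have "(\<Sum>y\<in>V. \<bar>H y - ha y\<bar>) = 2 * (\<Sum>y\<in>V. \<bar>D y + 3 * t\<bar>)"
    using pt by (simp add: sum_distrib_left)
  then have upper: "(\<Sum>y\<in>V. \<bar>D y + 3 * t\<bar>) \<le> int K" using H(4) by simp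
  have c0': "card {x\<in>V. d x = 0} = 1"
  proof -
    have "{x\<in>V. d x = 0} = {v}" using d0 vV by auto
    then show ?thesis by simp
  qed
  have c1': "card {x\<in>V. d x = 1} = 1"
  proof -
    have "{x\<in>V. d x = 1} = {u}" using d1 uV by auto
    then show ?thesis by simp
  qed
  have lower: "int (3 * n div 2 + 1) \<le> (\<Sum>x\<in>V. \<bar>D x + 3 * t\<bar>)"
    by (rule sum_lower[OF fin _ SV S3 c0' c1']) (use S(2) assms(2) D_def in \<open>auto simp: k0_def\<close>)
  have KB: "3 * n div 2 + 1 \<le> K" using upper lower by linarith
  have finC: "finite C"
  proof -
    have "C \<subseteq> {f. \<forall>x. (x \<in> V \<longrightarrow> f x \<in> {..<3}) \<and> (x \<notin> V \<longrightarrow> f x = 0)}"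
      unfolding C_def colourings_def proper3_def by auto
    moreover have "finite {f. \<forall>x. (x \<in> V \<longrightarrow> f x \<in> {..<(3::nat)}) \<and> (x \<notin> V \<longrightarrow> f x = 0)}"
      by (rule finite_set_of_finite_funs) (use fin in auto)
    ultimately show ?thesis by (rule finite_subset)
  qed
  have setfin: "finite {dist C CE a b | a b. a \<in> C \<and> b \<in> C}"
  proof -
    have "{dist C CE a b | a b. a \<in> C \<and> b \<in> C} = (\<lambda>(a,b). dist C CE a b) ` (C \<times> C)" by auto
    then show ?thesis using finC by simp
  qed
  have "\<alpha> \<in> C" "\<beta> \<in> C" using pa pb unfolding C_def colourings_def by auto
  then have "K \<in> {dist C CE a b | a b. a \<in> C \<and> b \<in> C}" unfolding K_def by blast
  then have "K \<le> diam C CE" unfolding diam_def by (rule le_cSup_finite[OF setfin])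
  then show ?thesis using KB unfolding C_def CE_def by simp
qed

end
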